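(* Let $n\ge 2$ and let $LS(\mathbb{R}^n)$ be the real vector space of Laplacian maps $\mathbb{R}^n\to\mathbb{R}^n$. Then there is a linear isomorphism \[ LS(\mathbb{R}^n)\simeq \bigl(C^2(\mathbb{R}^{n-1})/\mathbb{R}\bigr)\oplus\mathbb{R}, \] where $\mathbb{R}\subset C^2(\mathbb{R}^{n-1})$ denotes the subspace of constant functions.
   Context: A real $n\times n$ matrix $L=(l_{ij})$ is a Laplacian matrix if it is symmetric and $l_{ii}=-\sum_{j\neq i} l_{ij}$ for $i=1,\dots,n$. A map $f:\mathbb{R}^n\to\mathbb{R}^n$ of class $C^1$ is a Laplacian map if its Jacobian matrix $Jf(x)$ is a Laplacian matrix for every $x\in\mathbb{R}^n$. $LS(\mathbb{R}^n)$ is a vector space under pointwise operations. *)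

theory Defs
  imports "HOL-Analysis.Analysis"
begin

definition C1_map :: "(real^'a \<Rightarrow> real^'b) \<Rightarrow> bool" where
  "C1_map f \<longleftrightarrow> (\<exists>f'. (\<forall>x. (f has_derivative f' x) (at x)) \<and>
                         continuous_on UNIV (\<lambda>x. matrix (f' x)))"

definition C2_fun :: "(real^'a \<Rightarrow> real) \<Rightarrow> bool" where
  "C2_fun g \<longleftrightarrow> (\<exists>D. (\<forall>x. (g has_derivative (\<lambda>h. D x \<bullet> h)) (at x)) \<and> C1_map D)"

definition laplacian_matrix :: "real^'n^'n \<Rightarrow> bool" where
  "laplacian_matrix L \<longleftrightarrow> transpose L = L \<and>
     (\<forall>i. L $ i $ i = - (\<Sum>j\<in>UNIV - {i}. L $ i $ j))"

definition laplacian_map :: "(real^'n \<Rightarrow> real^'n) \<Rightarrow> bool" where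
  "laplacian_map f \<longleftrightarrow> (\<exists>f'. (\<forall>x. (f has_derivative f' x) (at x)) \<and>
                         continuous_on UNIV (\<lambda>x. matrix (f' x)) \<and>
                         (\<forall>x. laplacian_matrix (matrix (f' x))))"

end

theory Submission
  imports Defs
begin


lemma hess_aux:
  fixes g :: "'a::euclidean_space \<Rightarrow> real" and D :: "'a \<Rightarrow> 'a"
  assumes dg: "\<And>x. (g has_derivative (\<lambda>h. D x \<bullet> h)) (at x)"
    and lD: "linear D'"
    and R: "\<forall>y. norm (y - x) < d \<longrightarrow> norm (D y - D x - D' (y - x)) \<le> e * norm (y - x)"
    and e: "e > 0" and t: "t > 0" and td: "t * (norm u + norm v) < d"
  shows "\<bar>g (x + t *\<^sub>R u + t *\<^sub>R v) - g (x + t *\<^sub>R v) - g (x + t *\<^sub>R u) + g x - t^2 * (D' v \<bullet> u)\<bar>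
          \<le> 2 * e * t^2 * norm u * (norm u + norm v)"
proof -
  define \<psi> where "\<psi> s = g (x + (s*t) *\<^sub>R u + t *\<^sub>R v) - g (x + (s*t) *\<^sub>R u)" for s
  have der: "(\<psi> has_derivative (\<lambda>r. D (x + (s*t) *\<^sub>R u + t *\<^sub>R v) \<bullet> ((r*t) *\<^sub>R u)
                 - D (x + (s*t) *\<^sub>R u) \<bullet> ((r*t) *\<^sub>R u))) (at s within {0..1})" for s
  proof -
    have 1: "((\<lambda>s. x + (s*t) *\<^sub>R u + t *\<^sub>R v) has_derivative (\<lambda>r. (r*t) *\<^sub>R u)) (at s within {0..1})"
      by (auto intro!: derivative_eq_intros simp: algebra_simps)
    have 2: "((\<lambda>s. x + (s*t) *\<^sub>R u) has_derivative (\<lambda>r. (r*t) *\<^sub>R u)) (at s within {0..1})"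
      by (auto intro!: derivative_eq_intros simp: algebra_simps)
    have a: "((\<lambda>s. g (x + (s*t) *\<^sub>R u + t *\<^sub>R v)) has_derivative (\<lambda>r. D (x + (s*t) *\<^sub>R u + t *\<^sub>R v) \<bullet> ((r*t) *\<^sub>R u))) (at s within {0..1})"
      using has_derivative_compose[OF 1 has_derivative_subset[OF dg]] by (simp add: o_def)
    have b: "((\<lambda>s. g (x + (s*t) *\<^sub>R u)) has_derivative (\<lambda>r. D (x + (s*t) *\<^sub>R u) \<bullet> ((r*t) *\<^sub>R u))) (at s within {0..1})"
      using has_derivative_compose[OF 2 has_derivative_subset[OF dg]] by (simp add: o_def)
    show ?thesis unfolding \<psi>_def by (rule has_derivative_diff[OF a b])
  qed
  obtain s where s: "s \<in> {0<..<1}" and eq: "\<psi> 1 - \<psi> 0 = D (x + (s*t) *\<^sub>R u + t *\<^sub>R v) \<bullet> (((1-0)*t) *\<^sub>R u)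
                 - D (x + (s*t) *\<^sub>R u) \<bullet> (((1-0)*t) *\<^sub>R u)"
    using mvt_simple[of 0 1 \<psi>, OF _ der] by auto
  define a where "a = x + (s*t) *\<^sub>R u"
  have lhs: "g (x + t *\<^sub>R u + t *\<^sub>R v) - g (x + t *\<^sub>R v) - g (x + t *\<^sub>R u) + g x = \<psi> 1 - \<psi> 0"
    by (simp add: \<psi>_def)
  have Da: "D (a + t *\<^sub>R v) - D a = t *\<^sub>R D' v + ((D (a + t *\<^sub>R v) - D x - D' (a + t *\<^sub>R v - x)) - (D a - D x - D' (a - x)))"
    using lD by (simp add: a_def linear_diff linear_add linear_scale algebra_simps)
  have n1: "norm (a + t *\<^sub>R v - x) \<le> t * (norm u + norm v)"
  proof -
    have "norm (a + t *\<^sub>R v - x) = norm ((s*t) *\<^sub>R u + t *\<^sub>R v)" by (simp add: a_def)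
    also have "\<dots> \<le> s*t*norm u + t * norm v" using s t
      by (metis (no_types, opaque_lifting) abs_of_nonneg greaterThanLessThan_iff less_eq_real_def mult_nonneg_nonneg norm_scaleR norm_triangle_ineq abs_of_pos)
    also have "\<dots> \<le> t * (norm u + norm v)" using s t
      by (simp add: algebra_simps mult_left_le_one_le mult_right_le_one_le)
    finally show ?thesis .
  qed
  have n2: "norm (a - x) \<le> t * norm u"
    using s t by (simp add: a_def mult_left_le_one_le abs_of_nonneg)
  have r1: "norm (D (a + t *\<^sub>R v) - D x - D' (a + t *\<^sub>R v - x)) \<le> e * (t * (norm u + norm v))"
    using R n1 td e by (meson le_less_trans mult_left_mono order_trans less_imp_le)
  have r2: "norm (D a - D x - D' (a - x)) \<le> e * (t * (norm u + norm v))"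
  proof -
    have "norm (a - x) < d" using n2 td t by (smt (verit) mult_left_mono norm_ge_zero)
    then have "norm (D a - D x - D' (a - x)) \<le> e * norm (a - x)" using R by blast
    also have "\<dots> \<le> e * (t * (norm u + norm v))" using n2 e t
      by (smt (verit) mult_left_mono norm_ge_zero mult_nonneg_nonneg)
    finally show ?thesis .
  qed
  define r where "r = (D (a + t *\<^sub>R v) - D x - D' (a + t *\<^sub>R v - x)) - (D a - D x - D' (a - x))"
  have nr: "norm r \<le> 2 * e * t * (norm u + norm v)"
  proof -
    have "norm r \<le> norm (D (a + t *\<^sub>R v) - D x - D' (a + t *\<^sub>R v - x)) + norm (D a - D x - D' (a - x))"
      unfolding r_def by (rule norm_triangle_ineq4)
    then show ?thesis using r1 r2 by linarith
  qed
  have "\<psi> 1 - \<psi> 0 = t * ((D (a + t *\<^sub>R v) - D a) \<bullet> u)"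
    using eq by (simp add: a_def inner_diff_left algebra_simps)
  also have "\<dots> = t * ((t *\<^sub>R D' v + r) \<bullet> u)"
    unfolding r_def by (subst Da) (rule refl)
  also have "\<dots> = t^2 * (D' v \<bullet> u) + t * (r \<bullet> u)"
    by (simp add: inner_add_left algebra_simps power2_eq_square)
  finally have "\<psi> 1 - \<psi> 0 - t^2 * (D' v \<bullet> u) = t * (r \<bullet> u)" by simp
  moreover have "\<bar>t * (r \<bullet> u)\<bar> \<le> 2 * e * t^2 * norm u * (norm u + norm v)"
  proof -
    have "\<bar>r \<bullet> u\<bar> \<le> norm r * norm u" by (rule Cauchy_Schwarz_ineq2)
    also have "\<dots> \<le> 2 * e * t * (norm u + norm v) * norm u" by (rule mult_right_mono[OF nr]) simp
    finally have h: "\<bar>r \<bullet> u\<bar> \<le> 2 * e * t * (norm u + norm v) * norm u" .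
    have "\<bar>t * (r \<bullet> u)\<bar> = t * \<bar>r \<bullet> u\<bar>" using t by (simp add: abs_mult)
    also have "\<dots> \<le> t * (2 * e * t * (norm u + norm v) * norm u)"
      using h t by (intro mult_left_mono) auto
    also have "\<dots> = 2 * e * t^2 * norm u * (norm u + norm v)" by (simp add: power2_eq_square algebra_simps)
    finally show ?thesis .
  qed
  ultimately show ?thesis using lhs by simp
qed

lemma small_zero:
  fixes a C :: real
  assumes "C \<ge> 0" and h: "\<And>e. e > 0 \<Longrightarrow> \<bar>a\<bar> \<le> e * C"
  shows "a = 0"
proof (rule ccontr)
  assume "a \<noteq> 0"
  then have pa: "\<bar>a\<bar> > 0" by simp
  define e where "e = \<bar>a\<bar> / (2 * (C + 1))"
  have e: "e > 0" using pa assms(1) by (simp add: e_def)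
  have "e * C < \<bar>a\<bar>"
  proof -
    have "e * C = \<bar>a\<bar> * (C / (2 * (C + 1)))" by (simp add: e_def)
    also have "\<dots> < \<bar>a\<bar> * 1" using pa assms(1) by (intro mult_strict_left_mono) auto
    finally show ?thesis by simp
  qed
  with h[OF e] show False by simp
qed

lemma hessian_sym:
  fixes g :: "'a::euclidean_space \<Rightarrow> real" and D :: "'a \<Rightarrow> 'a"
  assumes dg: "\<And>x. (g has_derivative (\<lambda>h. D x \<bullet> h)) (at x)"
    and dD: "(D has_derivative D') (at x)"
  shows "D' u \<bullet> v = D' v \<bullet> u"
proof -
  have lD: "linear D'" using dD by (simp add: has_derivative_at_alt bounded_linear.linear)
  define C where "C = 4 * (norm u + norm v)^2"
  have "\<bar>D' v \<bullet> u - D' u \<bullet> v\<bar> \<le> e * C" if e: "e > 0" for e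
  proof -
    from dD[unfolded has_derivative_at_alt] e obtain d where d: "d > 0"
      "\<forall>y. norm (y - x) < d \<longrightarrow> norm (D y - D x - D' (y - x)) \<le> e * norm (y - x)" by blast
    define t where "t = d / (2 * (norm u + norm v + 1))"
    have t: "t > 0" using d by (simp add: t_def add_nonneg_pos)
    have td: "t * (norm u + norm v) < d"
    proof -
      have "t * (norm u + norm v) = d * ((norm u + norm v) / (2 * (norm u + norm v + 1)))"
        by (simp add: t_def)
      also have "\<dots> < d * 1" using d by (intro mult_strict_left_mono) (auto simp: add_nonneg_pos)
      finally show ?thesis by simp
    qed
    have td': "t * (norm v + norm u) < d" using td by (simp add: add.commute)
    note A = hess_aux[OF dg lD d(2) e t td]
    note B = hess_aux[where u=v and v=u, OF dg lD d(2) e t td']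
    define \<Delta> where "\<Delta> = g (x + t *\<^sub>R u + t *\<^sub>R v) - g (x + t *\<^sub>R v) - g (x + t *\<^sub>R u) + g x"
    have B': "\<bar>\<Delta> - t^2 * (D' u \<bullet> v)\<bar> \<le> 2 * e * t^2 * norm v * (norm v + norm u)"
      using B unfolding \<Delta>_def by (simp add: algebra_simps)
    have A': "\<bar>\<Delta> - t^2 * (D' v \<bullet> u)\<bar> \<le> 2 * e * t^2 * norm u * (norm u + norm v)"
      using A unfolding \<Delta>_def .
    have "t^2 * \<bar>D' v \<bullet> u - D' u \<bullet> v\<bar> = \<bar>(\<Delta> - t^2 * (D' u \<bullet> v)) - (\<Delta> - t^2 * (D' v \<bullet> u))\<bar>"
    proof -
      have "t^2 * \<bar>D' v \<bullet> u - D' u \<bullet> v\<bar> = \<bar>t^2 * (D' v \<bullet> u - D' u \<bullet> v)\<bar>" by (simp add: abs_mult)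
      then show ?thesis by (simp add: algebra_simps)
    qed
    also have "\<dots> \<le> 2 * e * t^2 * norm v * (norm v + norm u) + 2 * e * t^2 * norm u * (norm u + norm v)"
      using A' B' by linarith
    also have "\<dots> = t^2 * (2 * e * (norm u + norm v)^2)" by (simp add: power2_eq_square algebra_simps)
    finally have "\<bar>D' v \<bullet> u - D' u \<bullet> v\<bar> \<le> 2 * e * (norm u + norm v)^2"
      using t by (simp add: mult_le_cancel_left_pos)
    also have "\<dots> \<le> e * C" using e by (simp add: C_def)
    finally show ?thesis .
  qed
  then have "D' v \<bullet> u - D' u \<bullet> v = 0" by (intro small_zero[of C]) (auto simp: C_def)
  then show ?thesis by simp
qed

lemma poincare:
  fixes h :: "'a::euclidean_space \<Rightarrow> 'a" and h' :: "'a \<Rightarrow> 'a \<Rightarrow> 'a"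
  assumes dh: "\<And>v. (h has_derivative h' v) (at v)"
    and ch: "\<And>u. continuous_on UNIV (\<lambda>v. h' v u)"
    and sym: "\<And>v u w. h' v u \<bullet> w = h' v w \<bullet> u"
  shows "\<exists>g. \<forall>v. (g has_derivative (\<lambda>w. h v \<bullet> w)) (at v)"
proof -
  have blh: "bounded_linear (h' v)" for v using dh by (rule has_derivative_bounded_linear)
  have lin: "linear (h' v)" for v using blh bounded_linear.linear by blast
  have hc: "continuous_on UNIV h"
    using dh has_derivative_continuous continuous_at_imp_continuous_on by blast
  define F where "F x t = h (t *\<^sub>R x) \<bullet> x" for x and t::real
  define G where "G x t = (\<lambda>w. t * (h' (t *\<^sub>R x) w \<bullet> x) + h (t *\<^sub>R x) \<bullet> w)" for x and t::real
  define Fx where "Fx x t = Blinfun (G x t)" for x t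
  have bl: "bounded_linear (G x t)" for x t
  proof -
    have "linear (G x t)" unfolding G_def
      by (simp add: linear_iff linear_add[OF lin] linear_scale[OF lin] inner_add_left inner_add_right algebra_simps)
    then show ?thesis by (simp add: linear_conv_bounded_linear)
  qed
  have Fx_apply: "blinfun_apply (Fx x t) w = t * (h' (t *\<^sub>R x) w \<bullet> x) + h (t *\<^sub>R x) \<bullet> w" for x t w
    unfolding Fx_def bounded_linear_Blinfun_apply[OF bl] by (simp add: G_def)
  have derF: "((\<lambda>x. F x t) has_derivative blinfun_apply (Fx x t)) (at x within UNIV)" for x t
  proof -
    have 1: "((\<lambda>x. h (t *\<^sub>R x)) has_derivative (\<lambda>w. h' (t *\<^sub>R x) (t *\<^sub>R w))) (at x)"
      using has_derivative_compose[OF has_derivative_scaleR_right[OF has_derivative_ident] dh]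
      by (simp add: o_def)
    have "((\<lambda>x. h (t *\<^sub>R x) \<bullet> x) has_derivative (\<lambda>w. h (t *\<^sub>R x) \<bullet> w + h' (t *\<^sub>R x) (t *\<^sub>R w) \<bullet> x)) (at x)"
      by (rule has_derivative_inner[OF 1 has_derivative_ident])
    then show ?thesis unfolding F_def
      by (rule has_derivative_eq_rhs) (auto simp: Fx_apply linear_scale[OF lin] fun_eq_iff)
  qed
  have contht: "continuous_on UNIV (\<lambda>t::real. h (t *\<^sub>R x))" for x
    by (rule continuous_on_compose2[OF hc]) (auto intro!: continuous_intros)
  have intF: "F x integrable_on cbox 0 1" for x
    unfolding F_def
    by (rule integrable_continuous) (auto intro!: continuous_intros continuous_on_subset[OF contht])
  have contFx: "continuous_on S (\<lambda>p. Fx (fst p) (snd p))" for S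
  proof (rule continuous_on_blinfun_componentwise)
    fix i :: 'a
    have c1: "continuous_on S (\<lambda>p. h' (snd p *\<^sub>R fst p) i)"
      by (rule continuous_on_compose2[OF ch]) (auto intro!: continuous_intros)
    have c2: "continuous_on S (\<lambda>p. h (snd p *\<^sub>R fst p))"
      by (rule continuous_on_compose2[OF hc]) (auto intro!: continuous_intros)
    show "continuous_on S (\<lambda>p. blinfun_apply (Fx (fst p) (snd p)) i)"
      unfolding Fx_apply by (intro continuous_intros c1 c2)
  qed
  have cont_fx: "continuous_on (UNIV \<times> cbox 0 1) (\<lambda>(x, t). Fx x t)"
    using contFx by (simp add: split_beta)
  define g where "g x = integral (cbox 0 1) (F x)" for x
  have "(g has_derivative (\<lambda>w. h v \<bullet> w)) (at v)" for v
  proof -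
    have L: "(g has_derivative integral (cbox 0 1) (Fx v)) (at v within UNIV)"
      unfolding g_def by (rule leibniz_rule[OF derF intF cont_fx]) auto
    have cv: "continuous_on (cbox 0 1) (Fx v)"
    proof -
      have "continuous_on (cbox 0 1) (\<lambda>t. Fx (fst (v,t)) (snd (v,t)))"
        by (rule continuous_on_compose2[OF contFx[of UNIV], where f="\<lambda>t. (v,t)"]) (auto intro!: continuous_intros)
      then show ?thesis by simp
    qed
    have iFx: "Fx v integrable_on cbox 0 1" by (rule integrable_continuous[OF cv])
    have val: "blinfun_apply (integral (cbox 0 1) (Fx v)) w = h v \<bullet> w" for w
    proof -
      have "blinfun_apply (integral (cbox 0 1) (Fx v)) w = integral (cbox 0 1) (\<lambda>t. blinfun_apply (Fx v t) w)"
        by (rule blinfun_apply_integral[OF iFx])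
      also have "\<dots> = integral {0..1} (\<lambda>t. h (t *\<^sub>R v) \<bullet> w + t * (h' (t *\<^sub>R v) v \<bullet> w))"
        by (simp add: Fx_apply cbox_interval sym[of _ w v] add.commute)
      also have "\<dots> = 1 * (h (1 *\<^sub>R v) \<bullet> w) - 0 * (h (0 *\<^sub>R v) \<bullet> w)"
      proof (rule integral_unique, rule fundamental_theorem_of_calculus)
        fix t :: real
        have 1: "((\<lambda>t. h (t *\<^sub>R v)) has_derivative (\<lambda>s. h' (t *\<^sub>R v) (s *\<^sub>R v))) (at t within {0..1})"
          using has_derivative_compose[OF has_derivative_scaleR_left[OF has_derivative_ident, of v] dh]
          by (simp add: o_def has_derivative_at_withinI)
        have 2: "((\<lambda>t. t * (h (t *\<^sub>R v) \<bullet> w)) has_derivative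
             (\<lambda>s. t * (h' (t *\<^sub>R v) (s *\<^sub>R v) \<bullet> w) + s * (h (t *\<^sub>R v) \<bullet> w))) (at t within {0..1})"
          by (rule has_derivative_mult[OF has_derivative_ident has_derivative_inner_left[OF 1], simplified])
        show "((\<lambda>t. t * (h (t *\<^sub>R v) \<bullet> w)) has_vector_derivative
             (h (t *\<^sub>R v) \<bullet> w + t * (h' (t *\<^sub>R v) v \<bullet> w))) (at t within {0..1})"
          unfolding has_vector_derivative_def
          by (rule has_derivative_eq_rhs[OF 2]) (auto simp: fun_eq_iff linear_scale[OF lin] algebra_simps)
      qed simp
      also have "\<dots> = h v \<bullet> w" by simp
      finally show ?thesis .
    qed
    have "blinfun_apply (integral (cbox 0 1) (Fx v)) = (\<lambda>w. h v \<bullet> w)" using val by auto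
    then show ?thesis using L by simp
  qed
  then show ?thesis by blast
qed



lemma cont_matrix_imp:
  fixes F :: "'x::topological_space \<Rightarrow> real^'a \<Rightarrow> real^'b"
  assumes lin: "\<And>x. linear (F x)" and c: "continuous_on S (\<lambda>x. matrix (F x))"
  shows "continuous_on S (\<lambda>x. F x u)"
proof -
  have eq: "F x u = matrix (F x) *v u" for x using matrix_vector_mul(2)[OF lin] by metis
  have "continuous_on S (\<lambda>x. matrix (F x) *v u)"
    unfolding matrix_vector_mult_def by (intro continuous_intros c)
  then show ?thesis by (simp add: eq)
qed

lemma cont_matrix_intro:
  fixes F :: "'x::topological_space \<Rightarrow> real^'a \<Rightarrow> real^'b"
  assumes c: "\<And>u. continuous_on S (\<lambda>x. F x u)"
  shows "continuous_on S (\<lambda>x. matrix (F x))"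
  unfolding matrix_def by (intro continuous_intros c)

lemma lap_imp:
  fixes F :: "real^'n \<Rightarrow> real^'n"
  assumes lin: "linear F" and lap: "laplacian_matrix (matrix F)"
  shows "F u \<bullet> v = F v \<bullet> u" and "F (\<chi> j. 1) = 0"
proof -
  have M: "matrix F *v x = F x" for x using matrix_vector_mul(2)[OF lin] by metis
  have T: "transpose (matrix F) = matrix F" using lap by (simp add: laplacian_matrix_def)
  have "F u \<bullet> v = (matrix F *v u) \<bullet> v" by (simp add: M)
  also have "\<dots> = (transpose (matrix F) *v u) \<bullet> v" by (simp add: T)
  also have "\<dots> = (matrix F *v v) \<bullet> u"
    by (metis dot_lmul_matrix inner_commute transpose_matrix_vector)
  also have "\<dots> = F v \<bullet> u" by (simp add: M)
  finally show "F u \<bullet> v = F v \<bullet> u" .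
  show "F (\<chi> j. 1) = 0"
  proof (subst vec_eq_iff, intro allI)
    fix i
    have "F (\<chi> j. 1) $ i = (\<Sum>j\<in>UNIV. matrix F $ i $ j)"
      by (simp flip: M add: matrix_vector_mult_def)
    also have "\<dots> = matrix F $ i $ i + (\<Sum>j\<in>UNIV - {i}. matrix F $ i $ j)"
      by (simp add: sum.remove[of UNIV i])
    also have "\<dots> = 0" using lap by (simp add: laplacian_matrix_def)
    finally show "F (\<chi> j. 1) $ i = 0 $ i" by simp
  qed
qed

lemma lap_intro:
  fixes F :: "real^'n \<Rightarrow> real^'n"
  assumes lin: "linear F" and sym: "\<And>u v. F u \<bullet> v = F v \<bullet> u" and one: "F (\<chi> j. 1) = 0"
  shows "laplacian_matrix (matrix F)"
proof -
  have M: "matrix F *v x = F x" for x using matrix_vector_mul(2)[OF lin] by metis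
  have ent: "matrix F $ i $ j = F (axis j 1) \<bullet> axis i 1" for i j
    by (simp add: matrix_def inner_axis)
  have "transpose (matrix F) $ i $ j = matrix F $ i $ j" for i j
  proof -
    have "transpose (matrix F) $ i $ j = matrix F $ j $ i" by (simp add: transpose_def)
    also have "\<dots> = matrix F $ i $ j" unfolding ent by (rule sym)
    finally show ?thesis .
  qed
  then have T: "transpose (matrix F) = matrix F" by (simp add: vec_eq_iff)
  have "matrix F $ i $ i = - (\<Sum>j\<in>UNIV - {i}. matrix F $ i $ j)" for i
  proof -
    have "(\<Sum>j\<in>UNIV. matrix F $ i $ j) = F (\<chi> j. 1) $ i"
      by (simp flip: M add: matrix_vector_mult_def)
    also have "\<dots> = 0" by (simp add: one)
    finally have "(\<Sum>j\<in>UNIV. matrix F $ i $ j) = 0" .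
    then show ?thesis by (simp add: sum.remove[of UNIV i])
  qed
  then show ?thesis using T by (simp add: laplacian_matrix_def)
qed

definition Grad :: "(real^'m \<Rightarrow> real) \<Rightarrow> real^'m \<Rightarrow> real^'m" where
  "Grad g = (SOME D. \<forall>x. (g has_derivative (\<lambda>h. D x \<bullet> h)) (at x))"

lemma Grad_eq:
  assumes d: "\<And>x. (g has_derivative (\<lambda>h. D x \<bullet> h)) (at x)"
  shows "Grad g = D"
proof -
  have G: "\<forall>x. (g has_derivative (\<lambda>h. Grad g x \<bullet> h)) (at x)"
    unfolding Grad_def by (rule someI[of _ D]) (simp add: d)
  show ?thesis
  proof
    fix x
    have "(\<lambda>h. Grad g x \<bullet> h) = (\<lambda>h. D x \<bullet> h)"
      using G d has_derivative_unique by blast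
    then have "Grad g x \<bullet> (Grad g x - D x) = D x \<bullet> (Grad g x - D x)" by metis
    then have "(Grad g x - D x) \<bullet> (Grad g x - D x) = 0" by (simp add: inner_diff_left)
    then show "Grad g x = D x" by simp
  qed
qed

locale coord =
  fixes n0 :: "'n::finite" and e :: "'m::finite \<Rightarrow> 'n"
  assumes bij: "bij_betw e UNIV (UNIV - {n0})"
begin

definition ei where "ei = inv_into UNIV e"

lemma e_ne[simp]: "e k \<noteq> n0" using bij by (auto simp: bij_betw_def)
lemma inj_e: "inj e" using bij by (simp add: bij_betw_def)
lemma ei_e[simp]: "ei (e k) = k" by (simp add: ei_def inv_into_f_f[OF inj_e])
lemma e_ei[simp]: "i \<noteq> n0 \<Longrightarrow> e (ei i) = i"
  unfolding ei_def using bij by (intro f_inv_into_f) (auto simp: bij_betw_def)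

lemma sum_split: "(\<Sum>i\<in>UNIV. F i) = F n0 + (\<Sum>k\<in>UNIV. F (e k))"
proof -
  have "(\<Sum>i\<in>UNIV. F i) = F n0 + (\<Sum>i\<in>UNIV - {n0}. F i)" by (simp add: sum.remove[of UNIV n0])
  also have "(\<Sum>i\<in>UNIV - {n0}. F i) = (\<Sum>k\<in>UNIV. F (e k))"
    by (rule sum.reindex_bij_betw[OF bij, symmetric])
  finally show ?thesis .
qed

definition L :: "real^'n \<Rightarrow> real^'m" where "L y = (\<chi> k. y $ e k - y $ n0)"
definition Lt :: "real^'m \<Rightarrow> real^'n" where
  "Lt v = (\<chi> i. if i = n0 then - (\<Sum>k\<in>UNIV. v $ k) else v $ ei i)"
definition E :: "real^'m \<Rightarrow> real^'n" where "E v = (\<chi> i. if i = n0 then 0 else v $ ei i)"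
definition P :: "real^'n \<Rightarrow> real^'m" where "P y = (\<chi> k. y $ e k)"
definition one :: "real^'n" where "one = (\<chi> i. 1)"
definition a0 :: "real^'n" where "a0 = axis n0 1"

lemma lin_L: "linear L" by (simp add: linear_iff L_def vec_eq_iff algebra_simps)
lemma lin_Lt: "linear Lt" by (simp add: linear_iff Lt_def vec_eq_iff algebra_simps sum.distrib sum_distrib_left)
lemma lin_E: "linear E" by (simp add: linear_iff E_def vec_eq_iff algebra_simps)
lemma lin_P: "linear P" by (simp add: linear_iff P_def vec_eq_iff algebra_simps)

lemma bl_L: "bounded_linear L" using lin_L linear_conv_bounded_linear by blast
lemma bl_Lt: "bounded_linear Lt" using lin_Lt linear_conv_bounded_linear by blast
lemma bl_E: "bounded_linear E" using lin_E linear_conv_bounded_linear by blast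
lemma bl_P: "bounded_linear P" using lin_P linear_conv_bounded_linear by blast

lemma Lt_adj: "Lt v \<bullet> y = v \<bullet> L y"
proof -
  have "Lt v \<bullet> y = (\<Sum>i\<in>UNIV. Lt v $ i * y $ i)" by (simp add: inner_vec_def)
  also have "\<dots> = Lt v $ n0 * y $ n0 + (\<Sum>k\<in>UNIV. Lt v $ e k * y $ e k)" by (rule sum_split)
  also have "\<dots> = (\<Sum>k\<in>UNIV. v $ k * (y $ e k - y $ n0))"
    by (simp add: Lt_def sum_distrib_right right_diff_distrib sum_subtractf)
  also have "\<dots> = v \<bullet> L y" by (simp add: inner_vec_def L_def)
  finally show ?thesis .
qed

lemma L_E[simp]: "L (E v) = v" by (simp add: L_def E_def vec_eq_iff)
lemma L_one[simp]: "L one = 0" by (simp add: L_def one_def vec_eq_iff)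
lemma P_Lt[simp]: "P (Lt v) = v" by (simp add: P_def Lt_def vec_eq_iff)
lemma P_a0[simp]: "P a0 = 0" by (simp add: P_def a0_def vec_eq_iff axis_def)
lemma E_L: "E (L y) = y - (y $ n0) *\<^sub>R one"
  by (simp add: E_def L_def one_def vec_eq_iff)
lemma P_E: "P x \<bullet> u = x \<bullet> E u"
proof -
  have "x \<bullet> E u = (\<Sum>i\<in>UNIV. x $ i * E u $ i)" by (simp add: inner_vec_def)
  also have "\<dots> = x $ n0 * E u $ n0 + (\<Sum>k\<in>UNIV. x $ e k * E u $ e k)" by (rule sum_split)
  also have "\<dots> = P x \<bullet> u" by (simp add: inner_vec_def P_def E_def)
  finally show ?thesis by simp
qed
lemma recon: "(\<Sum>i\<in>UNIV. x $ i) = c \<Longrightarrow> Lt (P x) + c *\<^sub>R a0 = x"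
  by (auto simp: vec_eq_iff Lt_def P_def a0_def axis_def sum_split[of "\<lambda>i. x $ i"])


definition Phi :: "((real^'m \<Rightarrow> real) \<times> real) \<Rightarrow> (real^'n \<Rightarrow> real^'n)" where
  "Phi p = (\<lambda>y. Lt (Grad (fst p) (L y)) + snd p *\<^sub>R a0)"

lemma Phi_lap:
  assumes "C2_fun g" shows "laplacian_map (Phi (g,c))"
proof -
  from assms obtain D where dg: "\<forall>x. (g has_derivative (\<lambda>h. D x \<bullet> h)) (at x)" and c1: "C1_map D"
    unfolding C2_fun_def by blast
  from c1 obtain D' where dD: "\<forall>x. (D has_derivative D' x) (at x)"
    and cD: "continuous_on UNIV (\<lambda>x. matrix (D' x))" unfolding C1_map_def by blast
  have G: "Grad g = D" using dg Grad_eq by blast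
  have linD': "linear (D' x)" for x using dD has_derivative_linear by blast
  have cD': "continuous_on UNIV (\<lambda>x. D' x u)" for u by (rule cont_matrix_imp[OF linD' cD])
  define F where "F y = (\<lambda>u. Lt (D' (L y) (L u)))" for y
  have der: "(Phi (g,c) has_derivative F y) (at y)" for y
  proof -
    have 1: "((\<lambda>y. D (L y)) has_derivative (\<lambda>u. D' (L y) (L u))) (at y)"
      using has_derivative_compose[OF bounded_linear_imp_has_derivative[OF bl_L] dD[rule_format]]
      by (simp add: o_def)
    have 2: "((\<lambda>y. Lt (D (L y))) has_derivative F y) (at y)"
      unfolding F_def by (rule bounded_linear.has_derivative[OF bl_Lt 1])
    show ?thesis unfolding Phi_def fst_conv snd_conv G using has_derivative_add_const[OF 2] by simp
  qed
  have linF: "linear (F y)" for y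
    using linear_compose[OF linear_compose[OF lin_L linD'[of "L y"]] lin_Lt]
    by (simp add: o_def F_def)
  have cF: "continuous_on UNIV (\<lambda>y. matrix (F y))"
  proof (rule cont_matrix_intro)
    fix u
    have "continuous_on UNIV (\<lambda>y. D' (L y) (L u))"
      by (rule continuous_on_compose2[OF cD'[of "L u"]]) (auto intro: linear_continuous_on bl_L)
    then show "continuous_on UNIV (\<lambda>y. F y u)" unfolding F_def
      by (rule continuous_on_compose2[OF linear_continuous_on[OF bl_Lt]]) auto
  qed
  have lapF: "laplacian_matrix (matrix (F y))" for y
  proof (rule lap_intro[OF linF])
    fix u v
    show "F y u \<bullet> v = F y v \<bullet> u" unfolding F_def Lt_adj
      by (rule hessian_sym[OF dg[rule_format] dD[rule_format, of "L y"]])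
    show "F y (\<chi> j. 1) = 0" unfolding F_def one_def[symmetric]
      using linear_0[OF linD'] linear_0[OF lin_Lt] by simp
  qed
  show ?thesis unfolding laplacian_map_def using der cF lapF by blast
qed

lemma Phi_add:
  assumes "C2_fun g1" "C2_fun g2"
  shows "Phi (\<lambda>x. g1 x + g2 x, c1 + c2) = (\<lambda>y. Phi (g1, c1) y + Phi (g2, c2) y)"
proof -
  from assms obtain D1 D2 where d1: "\<forall>x. (g1 has_derivative (\<lambda>h. D1 x \<bullet> h)) (at x)"
    and d2: "\<forall>x. (g2 has_derivative (\<lambda>h. D2 x \<bullet> h)) (at x)"
    unfolding C2_fun_def by blast
  have "((\<lambda>x. g1 x + g2 x) has_derivative (\<lambda>h. (D1 x + D2 x) \<bullet> h)) (at x)" for x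
    using has_derivative_add[OF d1[rule_format] d2[rule_format]] by (simp add: inner_add_left)
  then have G: "Grad (\<lambda>x. g1 x + g2 x) = (\<lambda>x. D1 x + D2 x)" by (rule Grad_eq)
  have G1: "Grad g1 = D1" using d1 Grad_eq by blast
  have G2: "Grad g2 = D2" using d2 Grad_eq by blast
  show ?thesis unfolding Phi_def fst_conv snd_conv G G1 G2
    by (simp add: linear_add[OF lin_Lt] scaleR_add_left algebra_simps)
qed

lemma Phi_scale:
  assumes "C2_fun g"
  shows "Phi (\<lambda>x. a * g x, a * c) = (\<lambda>y. a *\<^sub>R Phi (g, c) y)"
proof -
  from assms obtain D where d: "\<forall>x. (g has_derivative (\<lambda>h. D x \<bullet> h)) (at x)"
    unfolding C2_fun_def by blast
  have "((\<lambda>x. a * g x) has_derivative (\<lambda>h. (a *\<^sub>R D x) \<bullet> h)) (at x)" for x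
    using has_derivative_mult_right[OF d[rule_format], of a] by simp
  then have G: "Grad (\<lambda>x. a * g x) = (\<lambda>x. a *\<^sub>R D x)" by (rule Grad_eq)
  have G1: "Grad g = D" using d Grad_eq by blast
  show ?thesis unfolding Phi_def fst_conv snd_conv G G1
    by (simp add: linear_scale[OF lin_Lt] scaleR_add_right)
qed

lemma Phi_kernel:
  assumes "C2_fun g"
  shows "Phi (g, c) = (\<lambda>y. 0) \<longleftrightarrow> (\<exists>k. \<forall>x. g x = k) \<and> c = 0"
proof -
  from assms obtain D where d: "\<forall>x. (g has_derivative (\<lambda>h. D x \<bullet> h)) (at x)"
    unfolding C2_fun_def by blast
  have G: "Grad g = D" using d Grad_eq by blast
  show ?thesis
  proof
    assume z: "Phi (g, c) = (\<lambda>y. 0)"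
    then have z': "Lt (D (L y)) + c *\<^sub>R a0 = 0" for y
      unfolding Phi_def fst_conv snd_conv G by (simp add: fun_eq_iff)
    have D0: "D x = 0" for x
    proof -
      have "P (Lt (D (L (E x))) + c *\<^sub>R a0) = 0" using z'[of "E x"] by (simp add: linear_0[OF lin_P])
      then show ?thesis by (simp add: linear_add[OF lin_P] linear_scale[OF lin_P])
    qed
    have "c *\<^sub>R a0 = 0" using z'[of 0] by (simp add: D0 linear_0[OF lin_Lt])
    then have c0: "c = 0" by (simp add: a0_def)
    have "\<exists>k. \<forall>x\<in>UNIV. g x = k"
      by (rule has_derivative_zero_constant[of UNIV]) (use d D0 in auto)
    then show "(\<exists>k. \<forall>x. g x = k) \<and> c = 0" using c0 by auto
  next
    assume "(\<exists>k. \<forall>x. g x = k) \<and> c = 0"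
    then obtain k where k: "\<And>x. g x = k" and c0: "c = 0" by auto
    have "g = (\<lambda>x. k)" using k by auto
    then have "(g has_derivative (\<lambda>h. (0::real^'m) \<bullet> h)) (at x)" for x by simp
    then have "Grad g = (\<lambda>x. 0)" by (rule Grad_eq)
    then show "Phi (g, c) = (\<lambda>y. 0)" unfolding Phi_def using c0 by (simp add: linear_0[OF lin_Lt])
  qed
qed


lemma Phi_surj:
  assumes "laplacian_map f" shows "\<exists>g c. C2_fun g \<and> Phi (g,c) = f"
proof -
  from assms obtain f' where df: "\<forall>x. (f has_derivative f' x) (at x)"
    and cf: "continuous_on UNIV (\<lambda>x. matrix (f' x))"
    and lap: "\<forall>x. laplacian_matrix (matrix (f' x))" unfolding laplacian_map_def by blast
  have linf': "linear (f' x)" for x using df has_derivative_linear by blast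
  have symf: "f' x u \<bullet> v = f' x v \<bullet> u" for x u v using lap_imp(1)[OF linf' lap[rule_format]] .
  have onef: "f' x one = 0" for x using lap_imp(2)[OF linf' lap[rule_format]] by (simp add: one_def)
  have cf': "continuous_on UNIV (\<lambda>x. f' x u)" for u by (rule cont_matrix_imp[OF linf' cf])
  have inv: "f (y + t *\<^sub>R one) = f y" for y t
  proof -
    have "\<exists>k. \<forall>s\<in>UNIV. f (y + s *\<^sub>R one) = k"
    proof (rule has_derivative_zero_constant[of UNIV])
      fix s :: real
      have 0: "((\<lambda>s. y + s *\<^sub>R one) has_derivative (\<lambda>r. r *\<^sub>R one)) (at s)"
        by (auto intro!: derivative_eq_intros)
      have "((\<lambda>s. f (y + s *\<^sub>R one)) has_derivative (\<lambda>r. f' (y + s *\<^sub>R one) (r *\<^sub>R one))) (at s)"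
        using has_derivative_compose[OF 0 df[rule_format]] by (simp add: o_def)
      then show "((\<lambda>s. f (y + s *\<^sub>R one)) has_derivative (\<lambda>h. 0)) (at s within UNIV)"
        by (simp add: linear_scale[OF linf'] onef)
    qed simp
    then obtain k where "\<And>s. f (y + s *\<^sub>R one) = k" by auto
    from this[of t] this[of 0] show ?thesis by simp
  qed
  have fEL: "f (E (L y)) = f y" for y
  proof -
    have "E (L y) = y + (- (y $ n0)) *\<^sub>R one" by (simp add: E_L)
    then show ?thesis using inv[of y "- (y $ n0)"] by metis
  qed
  obtain c where sc: "\<And>y. (\<Sum>i\<in>UNIV. f y $ i) = c"
  proof -
    have "\<exists>k. \<forall>y\<in>UNIV. f y \<bullet> one = k"
    proof (rule has_derivative_zero_constant[of UNIV])
      fix y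
      have 1: "((\<lambda>y. f y \<bullet> one) has_derivative (\<lambda>u. f' y u \<bullet> one)) (at y)"
        by (rule has_derivative_inner_left[OF df[rule_format]])
      have eq: "(\<lambda>u. f' y u \<bullet> one) = (\<lambda>h. 0)"
      proof
        fix u
        have "f' y u \<bullet> one = f' y one \<bullet> u" by (rule symf)
        then show "f' y u \<bullet> one = 0" by (simp add: onef)
      qed
      show "((\<lambda>y. f y \<bullet> one) has_derivative (\<lambda>h. 0)) (at y within UNIV)" using 1 eq by simp
    qed simp
    then obtain k where k: "\<And>y. f y \<bullet> one = k" by auto
    have "f y \<bullet> one = (\<Sum>i\<in>UNIV. f y $ i)" for y by (simp add: inner_vec_def one_def)
    then show thesis using that k by metis
  qed
  define h where "h v = P (f (E v))" for v
  define h' where "h' v = (\<lambda>w. P (f' (E v) (E w)))" for v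
  have dh: "(h has_derivative h' v) (at v)" for v
  proof -
    have 1: "((\<lambda>v. f (E v)) has_derivative (\<lambda>w. f' (E v) (E w))) (at v)"
      using has_derivative_compose[OF bounded_linear_imp_has_derivative[OF bl_E] df[rule_format]]
      by (simp add: o_def)
    show ?thesis unfolding h_def h'_def by (rule bounded_linear.has_derivative[OF bl_P 1])
  qed
  have ch': "continuous_on UNIV (\<lambda>v. h' v u)" for u
  proof -
    have "continuous_on UNIV (\<lambda>v. f' (E v) (E u))"
      by (rule continuous_on_compose2[OF cf'[of "E u"]]) (auto intro: linear_continuous_on bl_E)
    then show ?thesis unfolding h'_def
      by (rule continuous_on_compose2[OF linear_continuous_on[OF bl_P]]) auto
  qed
  have symh: "h' v u \<bullet> w = h' v w \<bullet> u" for v u w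
    unfolding h'_def P_E by (rule symf)
  from poincare[OF dh ch' symh] obtain g where dg: "\<forall>v. (g has_derivative (\<lambda>w. h v \<bullet> w)) (at v)" ..
  have C1: "C1_map h" unfolding C1_map_def
    by (rule exI[of _ h']) (use dh cont_matrix_intro[OF ch'] in auto)
  have C2: "C2_fun g" unfolding C2_fun_def by (rule exI[of _ h]) (use dg C1 in auto)
  have G: "Grad g = h" by (rule Grad_eq) (use dg in auto)
  have "Phi (g, c) = f"
  proof
    fix y
    have "Phi (g,c) y = Lt (P (f (E (L y)))) + c *\<^sub>R a0" by (simp add: Phi_def G h_def)
    also have "\<dots> = Lt (P (f y)) + c *\<^sub>R a0" by (simp add: fEL)
    also have "\<dots> = f y" by (rule recon[OF sc])
    finally show "Phi (g,c) y = f y" .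
  qed
  then show ?thesis using C2 by blast
qed

lemma main:
  "\<exists>\<Phi> :: ((real^'m \<Rightarrow> real) \<times> real) \<Rightarrow> (real^'n \<Rightarrow> real^'n).
     (\<forall>g c. C2_fun g \<longrightarrow> laplacian_map (\<Phi> (g, c))) \<and>
     (\<forall>g1 g2 c1 c2. C2_fun g1 \<longrightarrow> C2_fun g2 \<longrightarrow>
        \<Phi> (\<lambda>x. g1 x + g2 x, c1 + c2) = (\<lambda>y. \<Phi> (g1, c1) y + \<Phi> (g2, c2) y)) \<and>
     (\<forall>a g c. C2_fun g \<longrightarrow> \<Phi> (\<lambda>x. a * g x, a * c) = (\<lambda>y. a *\<^sub>R \<Phi> (g, c) y)) \<and>
     (\<forall>f. laplacian_map f \<longrightarrow> (\<exists>g c. C2_fun g \<and> \<Phi> (g, c) = f)) \<and>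
     (\<forall>g c. C2_fun g \<longrightarrow> (\<Phi> (g, c) = (\<lambda>y. 0) \<longleftrightarrow> (\<exists>k. \<forall>x. g x = k) \<and> c = 0))"
proof (intro exI[of _ Phi] conjI allI impI)
  fix g :: "real^'m \<Rightarrow> real" and c :: real
  assume "C2_fun g" then show "laplacian_map (Phi (g, c))" by (rule Phi_lap)
next
  fix g1 g2 :: "real^'m \<Rightarrow> real" and c1 c2 :: real assume "C2_fun g1" "C2_fun g2"
  then show "Phi (\<lambda>x. g1 x + g2 x, c1 + c2) = (\<lambda>y. Phi (g1, c1) y + Phi (g2, c2) y)" by (rule Phi_add)
next
  fix a c :: real and g :: "real^'m \<Rightarrow> real" assume "C2_fun g"
  then show "Phi (\<lambda>x. a * g x, a * c) = (\<lambda>y. a *\<^sub>R Phi (g, c) y)" by (rule Phi_scale)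
next
  fix f :: "real^'n \<Rightarrow> real^'n" assume "laplacian_map f" then show "\<exists>g c. C2_fun g \<and> Phi (g, c) = f" by (rule Phi_surj)
next
  fix g :: "real^'m \<Rightarrow> real" and c :: real assume "C2_fun g"
  then show "Phi (g, c) = (\<lambda>y. 0) \<longleftrightarrow> (\<exists>k. \<forall>x. g x = k) \<and> c = 0" by (rule Phi_kernel)
qed

end

theorem corollary4p1:
  assumes "CARD('n::finite) = CARD('m::finite) + 1"
  shows "\<exists>\<Phi> :: ((real^'m \<Rightarrow> real) \<times> real) \<Rightarrow> (real^'n \<Rightarrow> real^'n).
     (\<forall>g c. C2_fun g \<longrightarrow> laplacian_map (\<Phi> (g, c))) \<and>
     (\<forall>g1 g2 c1 c2. C2_fun g1 \<longrightarrow> C2_fun g2 \<longrightarrow>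
        \<Phi> (\<lambda>x. g1 x + g2 x, c1 + c2) = (\<lambda>y. \<Phi> (g1, c1) y + \<Phi> (g2, c2) y)) \<and>
     (\<forall>a g c. C2_fun g \<longrightarrow> \<Phi> (\<lambda>x. a * g x, a * c) = (\<lambda>y. a *\<^sub>R \<Phi> (g, c) y)) \<and>
     (\<forall>f. laplacian_map f \<longrightarrow> (\<exists>g c. C2_fun g \<and> \<Phi> (g, c) = f)) \<and>
     (\<forall>g c. C2_fun g \<longrightarrow> (\<Phi> (g, c) = (\<lambda>y. 0) \<longleftrightarrow> (\<exists>k. \<forall>x. g x = k) \<and> c = 0))"
proof -
  obtain n0 :: 'n where True by blast
  have "card (UNIV - {n0}) = CARD('m)" using assms by (simp add: card_Diff_singleton)
  then obtain e :: "'m \<Rightarrow> 'n" where "bij_betw e UNIV (UNIV - {n0})"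
    using finite_same_card_bij[of "UNIV :: 'm set" "UNIV - {n0}"] by auto
  then interpret coord n0 e by unfold_locales
  show ?thesis by (rule main)
qed

end
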